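(* Let $\mathbb{F}$ be an algebraically closed field with $\mathrm{char}\,\mathbb{F}=2$. Let $\underline{a},\underline{b}\in\mathbf{O}^n$, let $A\in{\rm GL}_n(\mathbb{F})$, and put $\underline{a}'=\underline{a}A$, $\underline{b}'=\underline{b}A$. Then: (a) ${\rm G}_2\underline{a}={\rm G}_2\underline{b}$ if and only if ${\rm G}_2\underline{a}'={\rm G}_2\underline{b}'$; (b) for every $d\ge2$, $f(\underline{a})=f(\underline{b})$ for all $f\in S_n^{(d)}$ if and only if $f(\underline{a}')=f(\underline{b}')$ for all $f\in S_n^{(d)}$; (c) the orbit ${\rm G}_2\underline{a}$ is Zariski closed in $\mathbf{O}^n$ if and only if ${\rm G}_2\underline{a}'$ is Zariski closed in $\mathbf{O}^n$.
   Context: The split octonion algebra $\mathbf{O}$ is the 8-dimensional $\mathbb{F}$-vector space of formal matrices $a=\begin{pmatrix}\alpha&\mathbf{u}\\ \mathbf{v}&\beta\end{pmatrix}$ with $\alpha,\beta\in\mathbb{F}$, $\mathbf{u},\mathbf{v}\in\mathbb{F}^3$, with multiplication $\begin{pmatrix}\alpha&\mathbf{u}\\ \mathbf{v}&\beta\end{pmatrix}\begin{pmatrix}\alpha'&\mathbf{u}'\\ \mathbf{v}'&\beta'\end{pmatrix}=\begin{pmatrix}\alpha\alpha'+\mathbf{u}\cdot\mathbf{v}'&\alpha\mathbf{u}'+\beta'\mathbf{u}-\mathbf{v}\times\mathbf{v}'\\ \alpha'\mathbf{v}+\beta\mathbf{v}'+\mathbf{u}\times\mathbf{u}'&\beta\beta'+\mathbf{v}\cdot\mathbf{u}'\end{pmatrix}$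 (dot product and cross product on $\mathbb{F}^3$). Trace $\mathrm{tr}(a)=\alpha+\beta$, norm $n(a)=\alpha\beta-\mathbf{u}\cdot\mathbf{v}$. ${\rm G}_2=\mathrm{Aut}(\mathbf{O})$ acts diagonally on $\mathbf{O}^n$. ${\rm GL}_n(\mathbb{F})$ acts on $\mathbf{O}^n$ on the right: for $A=(\alpha_{ij})$, $(\underline{a}A)_i=\sum_{k=1}^n\alpha_{ki}a_k$. $S_n$ is the set of polynomial functions on $\mathbf{O}^n$ consisting of $\underline{a}\mapsto n(a_i)$ ($1\le i\le n$, degree $2$) and $\underline{a}\mapsto\mathrm{tr}((\cdots((a_{i_1}a_{i_2})a_{i_3})\cdots)a_{i_k})$ for $k\ge1$, $1\le i_1<\cdots<i_k\le n$ (degree $k$); $S_n^{(d)}$ is its subset of elements of degree at most $d$. *)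

theory Defs
  imports "HOL-Computational_Algebra.Polynomial"
begin

datatype 'f vec3 = V3 'f 'f 'f

fun dot3 :: "'f::comm_ring_1 vec3 \<Rightarrow> 'f vec3 \<Rightarrow> 'f" where
  "dot3 (V3 x1 x2 x3) (V3 y1 y2 y3) = x1*y1 + x2*y2 + x3*y3"

fun cross3 :: "'f::comm_ring_1 vec3 \<Rightarrow> 'f vec3 \<Rightarrow> 'f vec3" where
  "cross3 (V3 x1 x2 x3) (V3 y1 y2 y3) =
     V3 (x2*y3 - x3*y2) (x3*y1 - x1*y3) (x1*y2 - x2*y1)"

fun vadd3 :: "'f::comm_ring_1 vec3 \<Rightarrow> 'f vec3 \<Rightarrow> 'f vec3" where
  "vadd3 (V3 x1 x2 x3) (V3 y1 y2 y3) = V3 (x1+y1) (x2+y2) (x3+y3)"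

fun vsub3 :: "'f::comm_ring_1 vec3 \<Rightarrow> 'f vec3 \<Rightarrow> 'f vec3" where
  "vsub3 (V3 x1 x2 x3) (V3 y1 y2 y3) = V3 (x1-y1) (x2-y2) (x3-y3)"

fun vsmult3 :: "'f::comm_ring_1 \<Rightarrow> 'f vec3 \<Rightarrow> 'f vec3" where
  "vsmult3 c (V3 x1 x2 x3) = V3 (c*x1) (c*x2) (c*x3)"

text \<open>Oct alpha u v beta represents the formal matrix with rows (alpha, u) and (v, beta).\<close>
datatype 'f oct = Oct 'f "'f vec3" "'f vec3" 'f

fun oct_add :: "'f::comm_ring_1 oct \<Rightarrow> 'f oct \<Rightarrow> 'f oct" where
  "oct_add (Oct a u v b) (Oct a' u' v' b') = Oct (a+a') (vadd3 u u') (vadd3 v v') (b+b')"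

definition oct_zero :: "'f::comm_ring_1 oct" where
  "oct_zero = Oct 0 (V3 0 0 0) (V3 0 0 0) 0"

fun oct_smult :: "'f::comm_ring_1 \<Rightarrow> 'f oct \<Rightarrow> 'f oct" where
  "oct_smult c (Oct a u v b) = Oct (c*a) (vsmult3 c u) (vsmult3 c v) (c*b)"

fun oct_mult :: "'f::comm_ring_1 oct \<Rightarrow> 'f oct \<Rightarrow> 'f oct" where
  "oct_mult (Oct a u v b) (Oct a' u' v' b') =
     Oct (a*a' + dot3 u v')
         (vsub3 (vadd3 (vsmult3 a u') (vsmult3 b' u)) (cross3 v v'))
         (vadd3 (vadd3 (vsmult3 a' v) (vsmult3 b v')) (cross3 u u'))
         (b*b' + dot3 v u')"

fun oct_tr :: "'f::comm_ring_1 oct \<Rightarrow> 'f" where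
  "oct_tr (Oct a u v b) = a + b"

fun oct_norm :: "'f::comm_ring_1 oct \<Rightarrow> 'f" where
  "oct_norm (Oct a u v b) = a*b - dot3 u v"

fun oct_coord :: "'f oct \<Rightarrow> nat \<Rightarrow> 'f" where
  "oct_coord (Oct a (V3 u1 u2 u3) (V3 v1 v2 v3) b) j =
     [a, u1, u2, u3, v1, v2, v3, b] ! j"

definition G2 :: "('f::field oct \<Rightarrow> 'f oct) set" where
  "G2 = {g. bij g \<and> (\<forall>x y. g (oct_add x y) = oct_add (g x) (g y))
              \<and> (\<forall>c x. g (oct_smult c x) = oct_smult c (g x))
              \<and> (\<forall>x y. g (oct_mult x y) = oct_mult (g x) (g y))}"

definition octn :: "nat \<Rightarrow> 'f oct list set" where
  "octn n = {xs. length xs = n}"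

definition G2_orbit :: "'f::field oct list \<Rightarrow> 'f oct list set" where
  "G2_orbit xs = (\<lambda>g. map g xs) ` G2"

text \<open>n x n matrices as functions nat => nat => 'f (entries with indices < n matter).\<close>
definition invertible_mat :: "nat \<Rightarrow> (nat \<Rightarrow> nat \<Rightarrow> 'f::field) \<Rightarrow> bool" where
  "invertible_mat n A \<longleftrightarrow> (\<exists>B.
      (\<forall>i<n. \<forall>j<n. (\<Sum>k<n. A i k * B k j) = (if i = j then 1 else 0)) \<and>
      (\<forall>i<n. \<forall>j<n. (\<Sum>k<n. B i k * A k j) = (if i = j then 1 else 0)))"

definition oct_sum_list :: "'f::comm_ring_1 oct list \<Rightarrow> 'f oct" where
  "oct_sum_list xs = foldr oct_add xs oct_zero"

definition gl_act :: "'f::comm_ring_1 oct list \<Rightarrow> (nat \<Rightarrow> nat \<Rightarrow> 'f) \<Rightarrow> 'f oct list" where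
  "gl_act xs A = map (\<lambda>i. oct_sum_list (map (\<lambda>k. oct_smult (A k i) (xs ! k)) [0..<length xs]))
                     [0..<length xs]"

definition lnprod :: "'f::comm_ring_1 oct list \<Rightarrow> nat list \<Rightarrow> 'f oct" where
  "lnprod xs is = foldl (\<lambda>p i. oct_mult p (xs ! i)) (xs ! hd is) (tl is)"

definition Sd :: "nat \<Rightarrow> nat \<Rightarrow> ('f::comm_ring_1 oct list \<Rightarrow> 'f) set" where
  "Sd n d =
     {(\<lambda>xs. oct_norm (xs ! i)) | i. i < n \<and> 2 \<le> d} \<union>
     {(\<lambda>xs. oct_tr (lnprod xs is)) | is. is \<noteq> [] \<and> sorted_wrt (<) is \<and>
          (\<forall>i\<in>set is. i < n) \<and> length is \<le> d}"

inductive_set poly_fun :: "nat \<Rightarrow> ('f::comm_ring_1 oct list \<Rightarrow> 'f) set" for n where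
  pconst: "(\<lambda>_. c) \<in> poly_fun n"
| pcoord: "i < n \<Longrightarrow> j < 8 \<Longrightarrow> (\<lambda>xs. oct_coord (xs ! i) j) \<in> poly_fun n"
| padd: "p \<in> poly_fun n \<Longrightarrow> q \<in> poly_fun n \<Longrightarrow> (\<lambda>xs. p xs + q xs) \<in> poly_fun n"
| pmult: "p \<in> poly_fun n \<Longrightarrow> q \<in> poly_fun n \<Longrightarrow> (\<lambda>xs. p xs * q xs) \<in> poly_fun n"

definition zariski_closed :: "nat \<Rightarrow> 'f::comm_ring_1 oct list set \<Rightarrow> bool" where
  "zariski_closed n X \<longleftrightarrow>
     (\<exists>P \<subseteq> poly_fun n. X = {xs \<in> octn n. \<forall>p\<in>P. p xs = 0})"

end

theory Submission
  imports Defs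
begin

lemma oct_cases8: obtains a u1 u2 u3 v1 v2 v3 b where "x = Oct a (V3 u1 u2 u3) (V3 v1 v2 v3) b"
  by (metis oct.exhaust vec3.exhaust)

lemma swap_id:
  fixes p x y :: "'f::comm_ring_1 oct"
  shows "oct_add (oct_mult (oct_mult p x) y) (oct_mult (oct_mult p y) x) =
    oct_add (oct_smult (oct_tr x) (oct_mult p y)) (oct_add (oct_smult (oct_tr y) (oct_mult p x))
      (oct_smult (oct_tr (oct_mult y x) - oct_tr x * oct_tr y) p))"
  by (cases p rule: oct_cases8; cases x rule: oct_cases8; cases y rule: oct_cases8) (simp add: algebra_simps)

lemma rep_id:
  fixes p x :: "'f::comm_ring_1 oct"
  shows "oct_mult (oct_mult p x) x =
    oct_add (oct_smult (oct_tr x) (oct_mult p x)) (oct_smult (- oct_norm x) p)"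
  by (cases p rule: oct_cases8; cases x rule: oct_cases8) (simp add: algebra_simps)

definition oct_one :: "'f::comm_ring_1 oct" where
  "oct_one = Oct 1 (V3 0 0 0) (V3 0 0 0) 1"

context fixes x y z :: "'f::comm_ring_1 oct" and c d :: 'f begin
lemma oct_add_assoc: "oct_add (oct_add x y) z = oct_add x (oct_add y z)"
  by (cases x rule: oct_cases8; cases y rule: oct_cases8; cases z rule: oct_cases8) (simp add: algebra_simps)
lemma oct_add_zero_left[simp]: "oct_add oct_zero x = x"
  by (cases x rule: oct_cases8) (simp add: oct_zero_def)
lemma oct_add_zero_right[simp]: "oct_add x oct_zero = x"
  by (cases x rule: oct_cases8) (simp add: oct_zero_def)
lemma oct_smult_add: "oct_smult c (oct_add x y) = oct_add (oct_smult c x) (oct_smult c y)"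
  by (cases x rule: oct_cases8; cases y rule: oct_cases8) (simp add: algebra_simps)
lemma oct_smult_smult[simp]: "oct_smult c (oct_smult d x) = oct_smult (c*d) x"
  by (cases x rule: oct_cases8) (simp add: algebra_simps)
lemma oct_smult_zero[simp]: "oct_smult c oct_zero = oct_zero"
  by (simp add: oct_zero_def)
lemma oct_smult_0[simp]: "oct_smult 0 x = oct_zero"
  by (cases x rule: oct_cases8) (simp add: oct_zero_def)
lemma oct_smult_1[simp]: "oct_smult 1 x = x"
  by (cases x rule: oct_cases8) simp
lemma oct_mult_add_left: "oct_mult (oct_add x y) z = oct_add (oct_mult x z) (oct_mult y z)"
  by (cases x rule: oct_cases8; cases y rule: oct_cases8; cases z rule: oct_cases8) (simp add: algebra_simps)
lemma oct_mult_add_right: "oct_mult x (oct_add y z) = oct_add (oct_mult x y) (oct_mult x z)"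
  by (cases x rule: oct_cases8; cases y rule: oct_cases8; cases z rule: oct_cases8) (simp add: algebra_simps)
lemma oct_mult_smult_left[simp]: "oct_mult (oct_smult c x) y = oct_smult c (oct_mult x y)"
  by (cases x rule: oct_cases8; cases y rule: oct_cases8) (simp add: algebra_simps)
lemma oct_mult_smult_right[simp]: "oct_mult x (oct_smult c y) = oct_smult c (oct_mult x y)"
  by (cases x rule: oct_cases8; cases y rule: oct_cases8) (simp add: algebra_simps)
lemma oct_mult_zero_left[simp]: "oct_mult oct_zero x = oct_zero"
  by (cases x rule: oct_cases8) (simp add: oct_zero_def)
lemma oct_mult_zero_right[simp]: "oct_mult x oct_zero = oct_zero"
  by (cases x rule: oct_cases8) (simp add: oct_zero_def)
lemma oct_tr_add[simp]: "oct_tr (oct_add x y) = oct_tr x + oct_tr y"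
  by (cases x rule: oct_cases8; cases y rule: oct_cases8) (simp add: algebra_simps)
lemma oct_tr_smult[simp]: "oct_tr (oct_smult c x) = c * oct_tr x"
  by (cases x rule: oct_cases8) (simp add: algebra_simps)
lemma oct_tr_zero[simp]: "oct_tr (oct_zero :: 'f oct) = 0"
  by (simp add: oct_zero_def)
lemma oct_norm_add: "oct_norm (oct_add x y) = oct_norm x + oct_norm y + oct_tr x * oct_tr y - oct_tr (oct_mult x y)"
  by (cases x rule: oct_cases8; cases y rule: oct_cases8) (simp add: algebra_simps)
lemma oct_norm_smult[simp]: "oct_norm (oct_smult c x) = c * c * oct_norm x"
  by (cases x rule: oct_cases8) (simp add: algebra_simps)
lemma oct_norm_zero[simp]: "oct_norm (oct_zero :: 'f oct) = 0"
  by (simp add: oct_zero_def)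
lemma oct_tr_comm: "oct_tr (oct_mult x y) = oct_tr (oct_mult y x)"
  by (cases x rule: oct_cases8; cases y rule: oct_cases8) (simp add: algebra_simps)
lemma oct_one_mult[simp]: "oct_mult oct_one x = x"
  by (cases x rule: oct_cases8) (simp add: oct_one_def)
lemma oct_coord_add: "j < 8 \<Longrightarrow> oct_coord (oct_add x y) j = oct_coord x j + oct_coord y j"
  by (cases x rule: oct_cases8; cases y rule: oct_cases8) (auto simp: less_Suc_eq numeral_eq_Suc)
lemma oct_coord_smult: "j < 8 \<Longrightarrow> oct_coord (oct_smult c x) j = c * oct_coord x j"
  by (cases x rule: oct_cases8) (auto simp: less_Suc_eq numeral_eq_Suc)
lemma oct_coord_zero: "j < 8 \<Longrightarrow> oct_coord (oct_zero :: 'f oct) j = 0"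
  by (auto simp: less_Suc_eq numeral_eq_Suc oct_zero_def)
lemma oct_eqI: assumes h: "\<forall>j<8. oct_coord x j = oct_coord y j" shows "x = y"
  using h[rule_format, of 0] h[rule_format, of 1] h[rule_format, of 2] h[rule_format, of 3]
    h[rule_format, of 4] h[rule_format, of 5] h[rule_format, of 6] h[rule_format, of 7]
  by (cases x rule: oct_cases8; cases y rule: oct_cases8) simp
end

lemma osl_nil[simp]: "oct_sum_list [] = oct_zero" by (simp add: oct_sum_list_def)
lemma osl_cons[simp]: "oct_sum_list (x # xs) = oct_add x (oct_sum_list xs)" by (simp add: oct_sum_list_def)
lemma osl_append: "oct_sum_list (xs @ ys) = oct_add (oct_sum_list xs) (oct_sum_list ys)"
  by (induction xs) (simp_all add: oct_add_assoc)
lemma osl_concat: "oct_sum_list (concat xss) = oct_sum_list (map oct_sum_list xss)"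
  by (induction xss) (simp_all add: osl_append)
lemma tr_osl: "oct_tr (oct_sum_list (map f L)) = sum_list (map (\<lambda>l. oct_tr (f l)) L)"
  by (induction L) simp_all
lemma coord_osl: "j < 8 \<Longrightarrow> oct_coord (oct_sum_list (map f L)) j = sum_list (map (\<lambda>l. oct_coord (f l) j) L)"
  by (induction L) (simp_all add: oct_coord_add oct_coord_zero)
lemma mult_osl_left: "oct_mult (oct_sum_list (map f L)) y = oct_sum_list (map (\<lambda>l. oct_mult (f l) y) L)"
  by (induction L) (simp_all add: oct_mult_add_left)
lemma mult_osl_right: "oct_mult x (oct_sum_list (map f L)) = oct_sum_list (map (\<lambda>l. oct_mult x (f l)) L)"
  by (induction L) (simp_all add: oct_mult_add_right)
lemma smult_osl: "oct_smult c (oct_sum_list (map f L)) = oct_sum_list (map (\<lambda>l. oct_smult c (f l)) L)"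
  by (induction L) (simp_all add: oct_smult_add)

definition Rw :: "'f::comm_ring_1 oct list \<Rightarrow> nat list \<Rightarrow> 'f oct" where
  "Rw xs w = foldl (\<lambda>p i. oct_mult p (xs ! i)) oct_one w"
definition Tw :: "'f::comm_ring_1 oct list \<Rightarrow> nat list \<Rightarrow> 'f" where
  "Tw xs w = oct_tr (Rw xs w)"

lemma Fv_add: "foldl (\<lambda>p i. oct_mult p (xs ! i)) (oct_add z1 z2) v =
   oct_add (foldl (\<lambda>p i. oct_mult p (xs ! i)) z1 v) (foldl (\<lambda>p i. oct_mult p (xs ! i)) z2 v)"
  by (induction v arbitrary: z1 z2) (simp_all add: oct_mult_add_left)
lemma Fv_smult: "foldl (\<lambda>p i. oct_mult p (xs ! i)) (oct_smult c z) v =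
   oct_smult c (foldl (\<lambda>p i. oct_mult p (xs ! i)) z v)"
  by (induction v arbitrary: z) simp_all

lemma lnprod_Rw: "is \<noteq> [] \<Longrightarrow> lnprod xs is = Rw xs is"
  by (cases "is") (simp_all add: lnprod_def Rw_def)

lemma Rw_snoc: "Rw xs (u @ [k]) = oct_mult (Rw xs u) (xs ! k)"
  by (simp add: Rw_def)

lemma Tw_single: "Tw xs [x] = oct_tr (xs ! x)" by (simp add: Tw_def Rw_def)
lemma Tw_pair: "Tw xs [x, y] = oct_tr (oct_mult (xs ! x) (xs ! y))" by (simp add: Tw_def Rw_def)

lemma key_swap:
  "Tw xs (u @ x # y # v) + Tw xs (u @ y # x # v) =
   Tw xs [x] * Tw xs (u @ y # v) + Tw xs [y] * Tw xs (u @ x # v)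
   + (Tw xs [y, x] - Tw xs [x] * Tw xs [y]) * Tw xs (u @ v)"
proof -
  let ?F = "\<lambda>z. foldl (\<lambda>p i. oct_mult p (xs ! i)) z v"
  let ?P = "Rw xs u"
  have e1: "Rw xs (u @ x # y # v) = ?F (oct_mult (oct_mult ?P (xs!x)) (xs!y))" by (simp add: Rw_def)
  have e2: "Rw xs (u @ y # x # v) = ?F (oct_mult (oct_mult ?P (xs!y)) (xs!x))" by (simp add: Rw_def)
  have e3: "Rw xs (u @ y # v) = ?F (oct_mult ?P (xs!y))" by (simp add: Rw_def)
  have e4: "Rw xs (u @ x # v) = ?F (oct_mult ?P (xs!x))" by (simp add: Rw_def)
  have e5: "Rw xs (u @ v) = ?F ?P" by (simp add: Rw_def)
  show ?thesis
    unfolding Tw_def e1 e2 e3 e4 e5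
    using arg_cong[OF swap_id[of ?P "xs!x" "xs!y"], of "\<lambda>z. oct_tr (?F z)"]
    by (simp add: Fv_add Fv_smult Tw_single[unfolded Tw_def] Tw_pair[unfolded Tw_def])
qed

lemma key_rep:
  "Tw xs (u @ x # x # v) = Tw xs [x] * Tw xs (u @ x # v) - oct_norm (xs ! x) * Tw xs (u @ v)"
proof -
  let ?F = "\<lambda>z. foldl (\<lambda>p i. oct_mult p (xs ! i)) z v"
  let ?P = "Rw xs u"
  have e1: "Rw xs (u @ x # x # v) = ?F (oct_mult (oct_mult ?P (xs!x)) (xs!x))" by (simp add: Rw_def)
  have e4: "Rw xs (u @ x # v) = ?F (oct_mult ?P (xs!x))" by (simp add: Rw_def)
  have e5: "Rw xs (u @ v) = ?F ?P" by (simp add: Rw_def)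
  show ?thesis
    unfolding Tw_def e1 e4 e5 rep_id
    by (simp add: Fv_add Fv_smult Tw_single[unfolded Tw_def])
qed


lemma not_sorted_split:
  "\<not> sorted_wrt (<) (w::nat list) \<Longrightarrow> \<exists>u x y v. w = u @ x # y # v \<and> y \<le> x"
proof (induction w)
  case Nil then show ?case by simp
next
  case (Cons a w)
  show ?case
  proof (cases "sorted_wrt (<) w")
    case True
    then obtain b w' where w: "w = b # w'" using Cons.prems by (cases w) auto
    have "\<not> a < b" using Cons.prems True unfolding w
      by simp (meson order.strict_trans)
    then show ?thesis unfolding w by (intro exI[of _ "[]"]) auto
  next
    case False
    then obtain u x y v where "w = u @ x # y # v \<and> y \<le> x" using Cons.IH by blast
    then show ?thesis by (intro exI[of _ "a # u"]) auto
  qed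
qed

lemma word_agree:
  fixes a b :: "'f::comm_ring_1 oct list"
  assumes S: "\<forall>f\<in>Sd n d. f a = f b" and d: "2 \<le> d"
  shows "set w \<subseteq> {..<n} \<Longrightarrow> length w \<le> d \<Longrightarrow> Tw a w = Tw b w"
proof (induction w rule: wf_induct_rule[OF wf_lenlex[OF wf_less_than]])
  case (1 w)
  have short: "Tw a y = Tw b y" if "length y < length w" "set y \<subseteq> {..<n}" for y
    using 1 that by (auto simp: lenlex_conv)
  show ?case
  proof (cases "sorted_wrt (<) w")
    case True
    show ?thesis
    proof (cases "w = []")
      case True then show ?thesis by (simp add: Tw_def Rw_def)
    next
      case False
      have "(\<lambda>xs. oct_tr (lnprod xs w)) \<in> Sd n d"
        unfolding Sd_def using False True 1(2,3) by blast
      from S[rule_format, OF this] False show ?thesis by (simp add: Tw_def lnprod_Rw)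
    qed
  next
    case False
    then obtain u x y v where w: "w = u @ x # y # v" and yx: "y \<le> x"
      using not_sorted_split by blast
    have xn: "x < n" and yn: "y < n" using 1(2) w by auto
    have len: "length w \<ge> 2" using w by simp
    have sx: "Tw a [x] = Tw b [x]" using short[of "[x]"] xn len by simp
    have sy: "Tw a [y] = Tw b [y]" using short[of "[y]"] yn len by simp
    have suv: "Tw a (u @ v) = Tw b (u @ v)" using short[of "u @ v"] 1(2) w by auto
    have sxv: "Tw a (u @ x # v) = Tw b (u @ x # v)" using short[of "u @ x # v"] 1(2) w by auto
    have syv: "Tw a (u @ y # v) = Tw b (u @ y # v)" using short[of "u @ y # v"] 1(2) w by auto
    show ?thesis
    proof (cases "y = x")
      case True
      have "(\<lambda>xs. oct_norm (xs ! x)) \<in> Sd n d" unfolding Sd_def using xn d by blast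
      with S have nx: "oct_norm (a ! x) = oct_norm (b ! x)" by auto
      show ?thesis unfolding w True key_rep using sx sxv suv nx True by simp
    next
      case False
      then have yx': "y < x" using yx by simp
      have lt: "(u @ y # x # v, w) \<in> lenlex less_than"
        unfolding w lenlex_conv lex_conv using yx' by auto
      have sw: "Tw a (u @ y # x # v) = Tw b (u @ y # x # v)"
        using 1(1)[OF lt] 1(2,3) w by auto
      have spair: "Tw a [y, x] = Tw b [y, x]"
      proof (cases "u @ v = []")
        case True
        then have "[y, x] = u @ y # x # v" by simp
        then show ?thesis using sw by simp
      next
        case False
        then show ?thesis using short[of "[y, x]"] xn yn w by auto
      qed
      have ea: "Tw a w = Tw a [x] * Tw a (u @ y # v) + Tw a [y] * Tw a (u @ x # v)
         + (Tw a [y, x] - Tw a [x] * Tw a [y]) * Tw a (u @ v) - Tw a (u @ y # x # v)"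
        using key_swap[of a u x y v] unfolding w by (simp add: algebra_simps)
      have eb: "Tw b w = Tw b [x] * Tw b (u @ y # v) + Tw b [y] * Tw b (u @ x # v)
         + (Tw b [y, x] - Tw b [x] * Tw b [y]) * Tw b (u @ v) - Tw b (u @ y # x # v)"
        using key_swap[of b u x y v] unfolding w by (simp add: algebra_simps)
      show ?thesis unfolding ea eb sx sy suv sxv syv sw spair ..
    qed
  qed
qed


lemma gl_length[simp]: "length (gl_act xs A) = length xs"
  by (simp add: gl_act_def)
lemma gl_nth: "i < length xs \<Longrightarrow>
  gl_act xs A ! i = oct_sum_list (map (\<lambda>k. oct_smult (A k i) (xs ! k)) [0..<length xs])"
  by (simp add: gl_act_def)

fun exr :: "nat \<Rightarrow> (nat \<Rightarrow> nat \<Rightarrow> 'f::comm_ring_1) \<Rightarrow> nat list \<Rightarrow> ('f \<times> nat list) list" where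
  "exr n A [] = [(1, [])]"
| "exr n A (i # w) = concat (map (\<lambda>p. map (\<lambda>k. (fst p * A k i, snd p @ [k])) [0..<n]) (exr n A w))"

lemma exr_words: "p \<in> set (exr n A w) \<Longrightarrow> set (snd p) \<subseteq> {..<n} \<and> length (snd p) = length w"
  by (induction w arbitrary: p) fastforce+

lemma exr_R:
  assumes len: "length xs = n"
  shows "set w \<subseteq> {..<n} \<Longrightarrow> Rw (gl_act xs A) (rev w) =
     oct_sum_list (map (\<lambda>p. oct_smult (fst p) (Rw xs (snd p))) (exr n A w))"
proof (induction w)
  case Nil then show ?case by (simp add: Rw_def)
next
  case (Cons i w)
  let ?g = "\<lambda>p. oct_smult (fst p) (Rw xs (snd p))"
  have i: "i < n" using Cons.prems by simp
  have "Rw (gl_act xs A) (rev (i # w)) = oct_mult (Rw (gl_act xs A) (rev w)) (gl_act xs A ! i)"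
    by (simp add: Rw_snoc)
  also have "\<dots> = oct_sum_list (map (\<lambda>p. oct_mult (?g p) (gl_act xs A ! i)) (exr n A w))"
    using Cons by (simp add: mult_osl_left)
  also have "\<dots> = oct_sum_list (map (\<lambda>p. oct_sum_list (map ?g
      (map (\<lambda>k. (fst p * A k i, snd p @ [k])) [0..<n]))) (exr n A w))"
    using i len by (simp add: gl_nth mult_osl_right smult_osl Rw_snoc o_def mult.commute)
  also have "\<dots> = oct_sum_list (map ?g (exr n A (i # w)))"
    by (simp add: map_concat osl_concat o_def)
  finally show ?case .
qed

lemma exr_T:
  assumes len: "length xs = n" and w: "set w \<subseteq> {..<n}"
  shows "Tw (gl_act xs A) (rev w) = sum_list (map (\<lambda>p. fst p * Tw xs (snd p)) (exr n A w))"
  unfolding Tw_def exr_R[OF len w] tr_osl by simp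

lemma norm_agree:
  fixes a b :: "'f::comm_ring_1 oct list"
  assumes t1: "\<forall>k<n. oct_tr (a!k) = oct_tr (b!k)"
    and t2: "\<forall>k<n. \<forall>l<n. oct_tr (oct_mult (a!k) (a!l)) = oct_tr (oct_mult (b!k) (b!l))"
    and nn: "\<forall>k<n. oct_norm (a!k) = oct_norm (b!k)"
  shows "set L \<subseteq> {..<n} \<Longrightarrow> oct_norm (oct_sum_list (map (\<lambda>k. oct_smult (c k) (a!k)) L)) =
    oct_norm (oct_sum_list (map (\<lambda>k. oct_smult (c k) (b!k)) L))"
proof (induction L)
  case Nil then show ?case by simp
next
  case (Cons k L)
  have k: "k < n" and L: "set L \<subseteq> {..<n}" using Cons.prems by auto
  have tr: "oct_tr (oct_sum_list (map (\<lambda>k. oct_smult (c k) (a!k)) L)) =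
            oct_tr (oct_sum_list (map (\<lambda>k. oct_smult (c k) (b!k)) L))"
    unfolding tr_osl using L t1 by (auto intro!: arg_cong[where f=sum_list] map_cong)
  have trm: "oct_tr (oct_mult (a!k) (oct_sum_list (map (\<lambda>k. oct_smult (c k) (a!k)) L))) =
            oct_tr (oct_mult (b!k) (oct_sum_list (map (\<lambda>k. oct_smult (c k) (b!k)) L)))"
    unfolding mult_osl_right tr_osl using L t2 k by (auto intro!: arg_cong[where f=sum_list] map_cong)
  show ?case using Cons.IH[OF L] tr trm t1 nn k by (simp add: oct_norm_add)
qed

lemma Sd_forward:
  fixes a b :: "'f::comm_ring_1 oct list"
  assumes la: "length a = n" and lb: "length b = n" and d: "2 \<le> d"
    and S: "\<forall>f\<in>Sd n d. f a = f b"
  shows "\<forall>f\<in>Sd n d. f (gl_act a M) = f (gl_act b M)"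
proof
  fix f :: "'f oct list \<Rightarrow> 'f" assume f: "f \<in> Sd n d"
  have W: "set w \<subseteq> {..<n} \<Longrightarrow> length w \<le> d \<Longrightarrow> Tw a w = Tw b w" for w
    using word_agree[OF S d] by blast
  show "f (gl_act a M) = f (gl_act b M)"
    using f unfolding Sd_def
  proof (elim UnE CollectE exE conjE)
    fix i assume fi: "f = (\<lambda>xs. oct_norm (xs ! i))" and i: "i < n"
    have t1: "\<forall>k<n. oct_tr (a!k) = oct_tr (b!k)"
      using W[of "[k]" for k] d by (auto simp: Tw_single)
    have t2: "\<forall>k<n. \<forall>l<n. oct_tr (oct_mult (a!k) (a!l)) = oct_tr (oct_mult (b!k) (b!l))"
      using W[of "[k, l]" for k l] d by (auto simp: Tw_pair)
    have nn: "\<forall>k<n. oct_norm (a!k) = oct_norm (b!k)"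
    proof (intro allI impI)
      fix k assume "k < n"
      then have "(\<lambda>xs. oct_norm (xs ! k)) \<in> Sd n d" unfolding Sd_def using d by blast
      from S[rule_format, OF this] show "oct_norm (a!k) = oct_norm (b!k)" by simp
    qed
    show ?thesis unfolding fi using i la lb
      norm_agree[OF t1 t2 nn, of "[0..<n]" "\<lambda>k. M k i"] by (simp add: gl_nth lessThan_atLeast0)
  next
    fix "is" assume fi: "f = (\<lambda>xs. oct_tr (lnprod xs is))" and ne: "is \<noteq> []"
      and lt: "\<forall>i\<in>set is. i < n" and ld: "length is \<le> d"
    have s: "set (rev is) \<subseteq> {..<n}" using lt by auto
    have "Tw (gl_act a M) (rev (rev is)) = Tw (gl_act b M) (rev (rev is))"
      unfolding exr_T[OF la s] exr_T[OF lb s]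
    proof (intro arg_cong[where f=sum_list] map_cong refl)
      fix p assume "p \<in> set (exr n M (rev is))"
      from exr_words[OF this] ld have "Tw a (snd p) = Tw b (snd p)" by (intro W) auto
      then show "fst p * Tw a (snd p) = fst p * Tw b (snd p)" by simp
    qed
    then show ?thesis unfolding fi using ne by (simp add: Tw_def lnprod_Rw)
  qed
qed


lemma sl_upt: "sum_list (map f [0..<n]) = (\<Sum>k<n. f k)"
  by (induction n) simp_all

lemma gl_comp:
  fixes x :: "'f::comm_ring_1 oct list"
  assumes len: "length x = n"
    and AB: "\<forall>i<n. \<forall>j<n. (\<Sum>k<n. A i k * B k j) = (if i = j then 1 else 0)"
  shows "gl_act (gl_act x A) B = x"
proof (rule nth_equalityI)
  show "length (gl_act (gl_act x A) B) = length x" by simp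
next
  fix i assume i: "i < length (gl_act (gl_act x A) B)"
  then have i: "i < n" using len by simp
  show "gl_act (gl_act x A) B ! i = x ! i"
  proof (rule oct_eqI, intro allI impI)
    fix j :: nat assume j: "j < 8"
    define c where "c l = oct_coord (x ! l) j" for l
    have "oct_coord (gl_act (gl_act x A) B ! i) j = (\<Sum>k<n. B k i * (\<Sum>l<n. A l k * c l))"
      using i j len by (simp add: gl_nth coord_osl oct_coord_smult sl_upt c_def)
    also have "\<dots> = (\<Sum>l<n. (\<Sum>k<n. A l k * B k i) * c l)"
      unfolding sum_distrib_left sum_distrib_right
      by (rule sum.swap[THEN trans]) (simp add: mult_ac)
    also have "\<dots> = (\<Sum>l<n. (if l = i then c l else 0))"
      using AB i by (intro sum.cong) auto
    also have "\<dots> = c i" using i by simp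
    finally show "oct_coord (gl_act (gl_act x A) B ! i) j = oct_coord (x ! i) j"
      by (simp add: c_def)
  qed
qed

lemma G2_zero: "g \<in> G2 \<Longrightarrow> g oct_zero = oct_zero"
  unfolding G2_def
  by (metis (mono_tags, lifting) mem_Collect_eq oct_smult_0)

lemma G2_osl: "g \<in> G2 \<Longrightarrow> g (oct_sum_list (map f L)) = oct_sum_list (map (\<lambda>l. g (f l)) L)"
  by (induction L) (simp_all add: G2_zero, auto simp: G2_def)

lemma G2_smult: "g \<in> G2 \<Longrightarrow> g (oct_smult c x) = oct_smult c (g x)"
  by (simp add: G2_def)

lemma map_gl: "g \<in> G2 \<Longrightarrow> map g (gl_act x A) = gl_act (map g x) A"
  unfolding gl_act_def
  by (auto simp: G2_osl G2_smult intro!: arg_cong[where f=oct_sum_list] map_cong)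

lemma orbit_gl: "G2_orbit (gl_act x A) = (\<lambda>y. gl_act y A) ` G2_orbit x"
  unfolding G2_orbit_def image_image by (auto simp: map_gl)

lemma orbit_len: "y \<in> G2_orbit x \<Longrightarrow> length y = length x"
  unfolding G2_orbit_def by auto

lemma poly_sum:
  "(\<forall>l\<in>set L. f l \<in> poly_fun n) \<Longrightarrow> (\<lambda>y. sum_list (map (\<lambda>l. f l y) L)) \<in> poly_fun n"
proof (induction L)
  case Nil then show ?case using poly_fun.pconst[of 0 n] by simp
next
  case (Cons l L)
  then show ?case by (simp add: poly_fun.padd)
qed

lemma poly_comp:
  fixes B :: "nat \<Rightarrow> nat \<Rightarrow> 'f::comm_ring_1" and n :: nat and p :: "'f oct list \<Rightarrow> 'f"
  defines "\<psi> \<equiv> \<lambda>y::'f oct list. map (\<lambda>i. oct_sum_list (map (\<lambda>k. oct_smult (B k i) (y!k)) [0..<n])) [0..<n]"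
  shows "p \<in> poly_fun n \<Longrightarrow> (\<lambda>y. p (\<psi> y)) \<in> poly_fun n"
proof (induction rule: poly_fun.induct)
  case (pconst c) then show ?case by (rule poly_fun.pconst)
next
  case (pcoord i j)
  have e: "(\<lambda>y. oct_coord (\<psi> y ! i) j) = (\<lambda>y. sum_list (map (\<lambda>k. B k i * oct_coord (y!k) j) [0..<n]))"
    using pcoord by (simp add: \<psi>_def coord_osl oct_coord_smult)
  show ?case unfolding e
    by (rule poly_sum) (auto intro!: poly_fun.pmult[OF poly_fun.pconst] poly_fun.pcoord pcoord)
next
  case (padd p q) then show ?case by (simp add: poly_fun.padd)
next
  case (pmult p q) then show ?case by (simp add: poly_fun.pmult)
qed

lemma closed_fwd:
  fixes x :: "'f::field oct list"
  assumes len: "length x = n"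
    and AB: "\<forall>i<n. \<forall>j<n. (\<Sum>k<n. A i k * B k j) = (if i = j then 1 else 0)"
    and BA: "\<forall>i<n. \<forall>j<n. (\<Sum>k<n. B i k * A k j) = (if i = j then 1 else 0)"
    and cl: "zariski_closed n (G2_orbit x)"
  shows "zariski_closed n (G2_orbit (gl_act x A))"
proof -
  define \<psi> where "\<psi> \<equiv> \<lambda>y::'f oct list. map (\<lambda>i. oct_sum_list (map (\<lambda>k. oct_smult (B k i) (y!k)) [0..<n])) [0..<n]"
  obtain P where P: "P \<subseteq> poly_fun n" and X: "G2_orbit x = {z \<in> octn n. \<forall>p\<in>P. p z = 0}"
    using cl unfolding zariski_closed_def by blast
  have psi: "length y = n \<Longrightarrow> \<psi> y = gl_act y B" for y
    by (simp add: \<psi>_def gl_act_def)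
  let ?P = "(\<lambda>p y. p (\<psi> y)) ` P"
  have P': "?P \<subseteq> poly_fun n" using P poly_comp[of _ n B] unfolding \<psi>_def by blast
  have "G2_orbit (gl_act x A) = {y \<in> octn n. \<forall>p\<in>?P. p y = 0}"
  proof (intro equalityI subsetI)
    fix y assume "y \<in> G2_orbit (gl_act x A)"
    then obtain z where z: "z \<in> G2_orbit x" and y: "y = gl_act z A" unfolding orbit_gl by blast
    have lz: "length z = n" using orbit_len[OF z] len by simp
    have "\<psi> y = z" using psi[of y] y lz gl_comp[OF lz AB] by simp
    then show "y \<in> {y \<in> octn n. \<forall>p\<in>?P. p y = 0}"
      using z X lz y by (auto simp: octn_def)
  next
    fix y assume "y \<in> {y \<in> octn n. \<forall>p\<in>?P. p y = 0}"
    then have ly: "length y = n" and h: "\<forall>p\<in>P. p (\<psi> y) = 0" by (auto simp: octn_def)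
    have "\<psi> y \<in> G2_orbit x" using X h ly by (simp add: octn_def \<psi>_def)
    then have "gl_act (\<psi> y) A \<in> G2_orbit (gl_act x A)" unfolding orbit_gl by blast
    moreover have "gl_act (\<psi> y) A = y" using psi[OF ly] gl_comp[OF ly BA] by simp
    ultimately show "y \<in> G2_orbit (gl_act x A)" by simp
  qed
  then show ?thesis using P' unfolding zariski_closed_def by blast
qed

theorem lemma7p2:
  fixes a b :: "'f::alg_closed_field oct list"
    and A :: "nat \<Rightarrow> nat \<Rightarrow> 'f"
    and n :: nat
  assumes char2: "CHAR('f) = 2"
    and a: "a \<in> octn n" and b: "b \<in> octn n"
    and A: "invertible_mat n A"
  shows "(G2_orbit a = G2_orbit b \<longleftrightarrow> G2_orbit (gl_act a A) = G2_orbit (gl_act b A))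
         \<and> (\<forall>d\<ge>2. (\<forall>f\<in>Sd n d. f a = f b) \<longleftrightarrow>
                       (\<forall>f\<in>Sd n d. f (gl_act a A) = f (gl_act b A)))
         \<and> (zariski_closed n (G2_orbit a) \<longleftrightarrow> zariski_closed n (G2_orbit (gl_act a A)))"
proof -
  obtain B where AB: "\<forall>i<n. \<forall>j<n. (\<Sum>k<n. A i k * B k j) = (if i = j then 1 else 0)"
    and BA: "\<forall>i<n. \<forall>j<n. (\<Sum>k<n. B i k * A k j) = (if i = j then 1 else 0)"
    using A unfolding invertible_mat_def by blast
  have la: "length a = n" and lb: "length b = n" using a b by (auto simp: octn_def)
  have ca: "gl_act (gl_act a A) B = a" by (rule gl_comp[OF la AB])
  have cb: "gl_act (gl_act b A) B = b" by (rule gl_comp[OF lb AB])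
  have la': "length (gl_act a A) = n" and lb': "length (gl_act b A) = n" using la lb by auto
  have p1: "G2_orbit a = G2_orbit b \<longleftrightarrow> G2_orbit (gl_act a A) = G2_orbit (gl_act b A)"
  proof
    assume "G2_orbit a = G2_orbit b"
    then show "G2_orbit (gl_act a A) = G2_orbit (gl_act b A)" by (simp add: orbit_gl)
  next
    assume "G2_orbit (gl_act a A) = G2_orbit (gl_act b A)"
    then have "G2_orbit (gl_act (gl_act a A) B) = G2_orbit (gl_act (gl_act b A) B)"
      by (simp add: orbit_gl)
    then show "G2_orbit a = G2_orbit b" using ca cb by simp
  qed
  have p2: "\<forall>d\<ge>2. (\<forall>f\<in>Sd n d. f a = f b) \<longleftrightarrow>
                       (\<forall>f\<in>Sd n d. f (gl_act a A) = f (gl_act b A))"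
  proof (intro allI impI iffI)
    fix d :: nat assume d: "2 \<le> d"
    {
      assume "\<forall>f\<in>Sd n d. f a = f b"
      then show "\<forall>f\<in>Sd n d. f (gl_act a A) = f (gl_act b A)" by (rule Sd_forward[OF la lb d])
    next
      assume "\<forall>f\<in>Sd n d. f (gl_act a A) = f (gl_act b A)"
      from Sd_forward[OF la' lb' d this, of B]
      show "\<forall>f\<in>Sd n d. f a = f b" using ca cb by simp
    }
  qed
  have p3: "zariski_closed n (G2_orbit a) \<longleftrightarrow> zariski_closed n (G2_orbit (gl_act a A))"
  proof
    assume "zariski_closed n (G2_orbit a)"
    then show "zariski_closed n (G2_orbit (gl_act a A))" by (rule closed_fwd[OF la AB BA])
  next
    assume "zariski_closed n (G2_orbit (gl_act a A))"
    from closed_fwd[OF la' BA AB this] show "zariski_closed n (G2_orbit a)" using ca by simp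
  qed
  show ?thesis using p1 p2 p3 by blast
qed

end
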